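(* Fix $I_{ij},I_{jk},I_{ki}\in[0,\infty)$. Define $\rho_E:\mathbb{R}^3_{>0}\to\mathbb{R}^3_{>0}$ by $$\rho_E(r_i,r_j,r_k)=(l_{ij},l_{jk},l_{ki}),$$ where $$l_{ij}=\sqrt{r_i^2+r_j^2+2I_{ij}r_ir_j},\quad l_{jk}=\sqrt{r_j^2+r_k^2+2I_{jk}r_jr_k},\quad l_{ki}=\sqrt{r_k^2+r_i^2+2I_{ki}r_kr_i}.$$ Then $\rho_E$ is a smooth embedding. In particular, for any given positive $l_{ij},l_{jk},l_{ki}$ there is at most one $(r_i,r_j,r_k)\in\mathbb{R}^3_{>0}$ with $\rho_E(r_i,r_j,r_k)=(l_{ij},l_{jk},l_{ki})$. *)

theory Defs
  imports "HOL-Analysis.Analysis"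
begin

fun Ck_on :: "nat \<Rightarrow> 'a::euclidean_space set \<Rightarrow> ('a \<Rightarrow> 'b::real_normed_vector) \<Rightarrow> bool" where
  "Ck_on 0 S f = continuous_on S f"
| "Ck_on (Suc k) S f =
     (\<exists>D. (\<forall>x\<in>S. (f has_derivative D x) (at x)) \<and> (\<forall>i\<in>Basis. Ck_on k S (\<lambda>x. D x i)))"

definition smooth_on :: "'a::euclidean_space set \<Rightarrow> ('a \<Rightarrow> 'b::real_normed_vector) \<Rightarrow> bool" where
  "smooth_on S f \<longleftrightarrow> (\<forall>k. Ck_on k S f)"

definition smooth_embedding :: "'a::euclidean_space set \<Rightarrow> ('a \<Rightarrow> 'b::euclidean_space) \<Rightarrow> bool" where
  "smooth_embedding S f \<longleftrightarrow>
     smooth_on S f \<and>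
     (\<forall>x\<in>S. \<exists>D. (f has_derivative D) (at x) \<and> inj D) \<and>
     (\<exists>g. homeomorphism S (f ` S) f g)"

definition pos_octant :: "(real^3) set" where
  "pos_octant = {r. \<forall>i. 0 < r $ i}"

definition edge_len :: "real \<Rightarrow> real \<Rightarrow> real \<Rightarrow> real" where
  "edge_len I a b = sqrt (a\<^sup>2 + b\<^sup>2 + 2 * I * a * b)"

text \<open>rho_E(r_i,r_j,r_k) = (l_ij, l_jk, l_ki); coordinates 1,2,3 stand for i,j,k.\<close>
definition rhoE :: "real \<Rightarrow> real \<Rightarrow> real \<Rightarrow> real^3 \<Rightarrow> real^3" where
  "rhoE Iij Ijk Iki r =
     vector [edge_len Iij (r$1) (r$2), edge_len Ijk (r$2) (r$3), edge_len Iki (r$3) (r$1)]"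

end

theory Submission
  imports Defs
begin

inductive Q :: "(real^3) set \<Rightarrow> (real^3 \<Rightarrow> real) \<Rightarrow> bool" for S where
  qconst: "Q S (\<lambda>x. c)"
| qcoord: "Q S (\<lambda>x. x $ i)"
| qadd: "Q S f \<Longrightarrow> Q S g \<Longrightarrow> Q S (\<lambda>x. f x + g x)"
| qmult: "Q S f \<Longrightarrow> Q S g \<Longrightarrow> Q S (\<lambda>x. f x * g x)"
| qinv: "Q S f \<Longrightarrow> (\<forall>x\<in>S. f x > 0) \<Longrightarrow> Q S (\<lambda>x. inverse (f x))"
| qsqrt: "Q S f \<Longrightarrow> (\<forall>x\<in>S. f x > 0) \<Longrightarrow> Q S (\<lambda>x. sqrt (f x))"

lemma Q_deriv:
  assumes "Q S f"
  shows "\<exists>D. (\<forall>x\<in>S. (f has_derivative D x) (at x)) \<and> (\<forall>i. Q S (\<lambda>x. D x i))"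
  using assms
proof induction
  case (qconst c)
  show ?case
    by (rule exI[of _ "\<lambda>x h. 0"]) (auto intro: Q.qconst)
next
  case (qcoord i)
  have "((\<lambda>x. x $ i) has_derivative (\<lambda>h. h $ i)) (at x)" for x :: "real^3"
    by (rule bounded_linear_imp_has_derivative) (rule bounded_linear_vec_nth)
  then show ?case
    by (intro exI[of _ "\<lambda>x h. h $ i"]) (auto intro: Q.qconst)
next
  case (qadd f g)
  then obtain Df Dg where f: "\<forall>x\<in>S. (f has_derivative Df x) (at x)" "\<forall>i. Q S (\<lambda>x. Df x i)"
    and g: "\<forall>x\<in>S. (g has_derivative Dg x) (at x)" "\<forall>i. Q S (\<lambda>x. Dg x i)" by blast
  show ?case
    apply (rule exI[of _ "\<lambda>x h. Df x h + Dg x h"])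
    using f g by (auto intro!: has_derivative_add Q.qadd)
next
  case (qmult f g)
  then obtain Df Dg where f: "\<forall>x\<in>S. (f has_derivative Df x) (at x)" "\<forall>i. Q S (\<lambda>x. Df x i)"
    and g: "\<forall>x\<in>S. (g has_derivative Dg x) (at x)" "\<forall>i. Q S (\<lambda>x. Dg x i)" by blast
  show ?case
    apply (rule exI[of _ "\<lambda>x h. f x * Dg x h + Df x h * g x"])
    using f g qmult.hyps by (auto intro!: has_derivative_mult Q.qadd Q.qmult)
next
  case (qinv f)
  then obtain Df where f: "\<forall>x\<in>S. (f has_derivative Df x) (at x)" "\<forall>i. Q S (\<lambda>x. Df x i)" by blast
  have e: "(\<lambda>x. - (inverse (f x) * Df x i * inverse (f x))) =
     (\<lambda>x. (\<lambda>x. - 1) x * ((\<lambda>x. inverse (f x)) x * (\<lambda>x. Df x i) x * (\<lambda>x. inverse (f x)) x))" for i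
    by auto
  show ?case
    apply (rule exI[of _ "\<lambda>x h. - (inverse (f x) * Df x h * inverse (f x))"])
    apply (intro conjI ballI allI)
    subgoal for x using f qinv.hyps by (intro Deriv.has_derivative_inverse) auto
    subgoal for i unfolding e
      using f qinv.hyps by (intro Q.qmult Q.qconst Q.qinv) auto
    done
next
  case (qsqrt f)
  then obtain Df where f: "\<forall>x\<in>S. (f has_derivative Df x) (at x)" "\<forall>i. Q S (\<lambda>x. Df x i)" by blast
  have e: "(\<lambda>x. Df x i * (inverse (sqrt (f x)) / 2)) =
     (\<lambda>x. (\<lambda>x. Df x i) x * ((\<lambda>x. inverse (sqrt (f x))) x * (\<lambda>x. 1/2) x))" for i
    by auto
  have p: "\<forall>x\<in>S. sqrt (f x) > 0" using qsqrt.hyps by auto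
  show ?case
    apply (rule exI[of _ "\<lambda>x h. Df x h * (inverse (sqrt (f x)) / 2)"])
    apply (intro conjI ballI allI)
    subgoal for x using f qsqrt.hyps by (intro has_derivative_real_sqrt) auto
    subgoal for i unfolding e
      using f qsqrt.hyps p by (intro Q.qmult Q.qconst Q.qinv Q.qsqrt) auto
    done
qed

lemma Q_Ck: "Q S f \<Longrightarrow> Ck_on k S f"
proof (induction k arbitrary: f)
  case 0
  then obtain D where "\<forall>x\<in>S. (f has_derivative D x) (at x)" using Q_deriv by blast
  then show ?case
    by (auto intro!: continuous_at_imp_continuous_on dest: has_derivative_continuous)
next
  case (Suc k)
  then obtain D where "\<forall>x\<in>S. (f has_derivative D x) (at x)" "\<forall>i. Q S (\<lambda>x. D x i)"
    using Q_deriv by blast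
  then show ?case using Suc.IH by auto
qed


lemma vec_has_derivative:
  fixes f :: "'a::real_normed_vector \<Rightarrow> real^'n"
  assumes "\<And>j. ((\<lambda>x. f x $ j) has_derivative D' j) (at x)"
  shows "(f has_derivative (\<lambda>h. \<chi> j. D' j h)) (at x)"
proof (rule iffD2[OF has_derivative_componentwise_within], rule ballI)
  fix i :: "real^'n" assume "i \<in> Basis"
  then obtain j where i: "i = axis j 1" by (auto simp: Basis_vec_def)
  have e1: "(\<lambda>x. f x \<bullet> i) = (\<lambda>x. f x $ j)" by (simp add: i inner_axis)
  have e2: "(\<lambda>h. (\<chi> j. D' j h) \<bullet> i) = D' j" by (simp add: i inner_axis)
  show "((\<lambda>x. f x \<bullet> i) has_derivative (\<lambda>h. (\<chi> j. D' j h) \<bullet> i)) (at x)"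
    unfolding e1 e2 by (rule assms)
qed

lemma QV_Ck: "\<forall>j. Q S (\<lambda>x. f x $ j) \<Longrightarrow> Ck_on k S (f :: real^3 \<Rightarrow> real^3)"
proof (induction k arbitrary: f)
  case 0
  have "\<forall>j. \<exists>D. (\<forall>x\<in>S. ((\<lambda>x. f x $ j) has_derivative D x) (at x)) \<and> (\<forall>i. Q S (\<lambda>x. D x i))"
    using 0 Q_deriv by blast
  then obtain DD where DD: "\<And>j. (\<forall>x\<in>S. ((\<lambda>x. f x $ j) has_derivative DD j x) (at x))"
    by metis
  have "\<forall>x\<in>S. (f has_derivative (\<lambda>h. \<chi> j. DD j x h)) (at x)"
    using DD by (auto intro!: vec_has_derivative)
  then show ?case
    by (auto intro!: continuous_at_imp_continuous_on dest: has_derivative_continuous)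
next
  case (Suc k)
  have "\<forall>j. \<exists>D. (\<forall>x\<in>S. ((\<lambda>x. f x $ j) has_derivative D x) (at x)) \<and> (\<forall>i. Q S (\<lambda>x. D x i))"
    using Suc.prems Q_deriv by blast
  then obtain DD where DD: "\<And>j. (\<forall>x\<in>S. ((\<lambda>x. f x $ j) has_derivative DD j x) (at x))"
     "\<And>j i. Q S (\<lambda>x. DD j x i)"
    by metis
  have "\<forall>x\<in>S. (f has_derivative (\<lambda>h. \<chi> j. DD j x h)) (at x)"
    using DD by (auto intro!: vec_has_derivative)
  moreover have "Ck_on k S (\<lambda>x. \<chi> j. DD j x i)" for i
    using Suc.IH DD(2) by simp
  ultimately show ?case by auto
qed

lemma Q_edge:
  assumes "0 \<le> I"
  shows "Q pos_octant (\<lambda>r. edge_len I (r $ a) (r $ b))"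
proof -
  have e: "(\<lambda>r. edge_len I (r $ a) (r $ b)) = (\<lambda>r. sqrt (r$a * r$a + r$b * r$b + 2*I * (r$a * r$b)))"
    by (simp add: edge_len_def power2_eq_square mult.assoc)
  have "0 < x$a * x$a + x$b * x$b + 2*I * (x$a * x$b)" if "x \<in> pos_octant" for x
  proof -
    have "0 < x$a" "0 < x$b" using that by (auto simp: pos_octant_def)
    then have "0 < x$a * x$a + x$b * x$b" by (intro add_pos_pos mult_pos_pos)
    moreover have "0 \<le> 2*I * (x$a * x$b)" using assms \<open>0 < x$a\<close> \<open>0 < x$b\<close> by simp
    ultimately show ?thesis by linarith
  qed
  then have pos: "\<forall>x\<in>pos_octant. 0 < x$a * x$a + x$b * x$b + 2*I * (x$a * x$b)" by blast
  have qa: "Q pos_octant (\<lambda>r. r$a)" and qb: "Q pos_octant (\<lambda>r. r$b)" by (rule qcoord)+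
  have qc: "Q pos_octant (\<lambda>r. 2*I)" by (rule qconst)
  have "Q pos_octant (\<lambda>r. r$a * r$a + r$b * r$b + 2*I * (r$a * r$b))"
    by (rule qadd[OF qadd[OF qmult[OF qa qa] qmult[OF qb qb]] qmult[OF qc qmult[OF qa qb]]])
  from qsqrt[OF this pos] show ?thesis unfolding e .
qed

lemma rhoE_smooth:
  assumes "0 \<le> Iij" and "0 \<le> Ijk" and "0 \<le> Iki"
  shows "smooth_on pos_octant (rhoE Iij Ijk Iki)"
proof -
  have qq: "\<forall>j. Q pos_octant (\<lambda>x. rhoE Iij Ijk Iki x $ j)"
    unfolding forall_3 rhoE_def vector_3 using assms by (auto intro!: Q_edge)
  show ?thesis unfolding smooth_on_def
  proof (rule allI)
    fix k show "Ck_on k pos_octant (rhoE Iij Ijk Iki)" by (rule QV_Ck[OF qq])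
  qed
qed


lemma has_derivative_nth3[derivative_intros]:
  "((\<lambda>x::real^'n. x $ i) has_derivative (\<lambda>h. h $ i)) F"
  by (rule bounded_linear_imp_has_derivative) (rule bounded_linear_vec_nth)

lemma edge_pos: "0 \<le> I \<Longrightarrow> 0 < a \<Longrightarrow> 0 < b \<Longrightarrow> 0 < edge_len I a b"
  unfolding edge_len_def by (auto intro!: add_pos_nonneg)

lemma edge_has_deriv:
  assumes I: "0 \<le> I" and r: "r \<in> pos_octant"
  shows "((\<lambda>r. edge_len I (r $ a) (r $ b)) has_derivative
     (\<lambda>h. ((r$a + I*r$b) * h$a + (r$b + I*r$a) * h$b) / edge_len I (r$a) (r$b))) (at r)"
proof -
  have pa: "0 < r$a" and pb: "0 < r$b" using r by (auto simp: pos_octant_def)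
  have g: "0 < (r$a)^2 + (r$b)^2 + 2*I*(r$a)*(r$b)"
    using pa pb I by (auto intro!: add_pos_nonneg)
  have s: "0 < sqrt ((r$a)^2 + (r$b)^2 + 2*I*(r$a)*(r$b))" using g by simp
  show ?thesis
    unfolding edge_len_def
    apply (rule has_derivative_eq_rhs)
     apply (rule has_derivative_real_sqrt[where g = "\<lambda>r. (r$a)^2 + (r$b)^2 + 2*I*(r$a)*(r$b)"])
      apply (rule g)
     apply (rule derivative_eq_intros refl)+
    using s
    apply (simp add: fun_eq_iff field_simps)
    done
qed

definition DR :: "real \<Rightarrow> real \<Rightarrow> real \<Rightarrow> real^3 \<Rightarrow> real^3 \<Rightarrow> real^3" where
  "DR Iij Ijk Iki r h = vector [
     ((r$1 + Iij*r$2) * h$1 + (r$2 + Iij*r$1) * h$2) / edge_len Iij (r$1) (r$2),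
     ((r$2 + Ijk*r$3) * h$2 + (r$3 + Ijk*r$2) * h$3) / edge_len Ijk (r$2) (r$3),
     ((r$3 + Iki*r$1) * h$3 + (r$1 + Iki*r$3) * h$1) / edge_len Iki (r$3) (r$1)]"

lemma rhoE_deriv:
  assumes "0 \<le> Iij" and "0 \<le> Ijk" and "0 \<le> Iki" and r: "r \<in> pos_octant"
  shows "(rhoE Iij Ijk Iki has_derivative DR Iij Ijk Iki r) (at r)"
proof (rule iffD2[OF has_derivative_componentwise_within], rule ballI)
  fix i :: "real^3" assume "i \<in> Basis"
  then obtain j where i: "i = axis j 1" by (auto simp: Basis_vec_def)
  have e1: "(\<lambda>x. rhoE Iij Ijk Iki x \<bullet> i) = (\<lambda>x. rhoE Iij Ijk Iki x $ j)" by (simp add: i inner_axis)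
  have e2: "(\<lambda>h. DR Iij Ijk Iki r h \<bullet> i) = (\<lambda>h. DR Iij Ijk Iki r h $ j)" by (simp add: i inner_axis)
  have "((\<lambda>x. rhoE Iij Ijk Iki x $ j) has_derivative (\<lambda>h. DR Iij Ijk Iki r h $ j)) (at r)"
    using exhaust_3[of j]
    by (auto simp: rhoE_def DR_def intro!: edge_has_deriv assms)
  then show "((\<lambda>x. rhoE Iij Ijk Iki x \<bullet> i) has_derivative (\<lambda>h. DR Iij Ijk Iki r h \<bullet> i)) (at r)"
    unfolding e1 e2 .
qed

lemma alg3:
  fixes a1 b1 a2 b2 a3 b3 x y z :: real
  assumes pos: "0<a1" "0<b1" "0<a2" "0<b2" "0<a3" "0<b3"
    and e: "a1*x + b1*y = 0" "a2*y + b2*z = 0" "b3*x + a3*z = 0"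
  shows "x = 0 \<and> y = 0 \<and> z = 0"
proof -
  have "x*(a1*a2*a3 + b1*b2*b3) = a2*a3*(a1*x+b1*y) - b1*a3*(a2*y+b2*z) + b1*b2*(b3*x+a3*z)"
    by (simp add: algebra_simps)
  also have "\<dots> = 0" using e by simp
  finally have "x*(a1*a2*a3 + b1*b2*b3) = 0" .
  moreover have "a1*a2*a3 + b1*b2*b3 > 0" using pos by (intro add_pos_pos mult_pos_pos)
  ultimately have x: "x = 0" by simp
  then have "y = 0" using e(1) pos by simp
  moreover then have "z = 0" using e(2) pos by simp
  ultimately show ?thesis using x by simp
qed

lemma DR_inj:
  assumes I: "0 \<le> Iij" "0 \<le> Ijk" "0 \<le> Iki" and r: "r \<in> pos_octant"
  shows "inj (DR Iij Ijk Iki r)"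
proof (rule injI)
  fix h k assume hk: "DR Iij Ijk Iki r h = DR Iij Ijk Iki r k"
  have p1: "0 < r$1" and p2: "0 < r$2" and p3: "0 < r$3" using r by (auto simp: pos_octant_def)
  have l1: "0 < edge_len Iij (r$1) (r$2)" and l2: "0 < edge_len Ijk (r$2) (r$3)"
    and l3: "0 < edge_len Iki (r$3) (r$1)" using I p1 p2 p3 by (auto intro: edge_pos)
  from hk have "DR Iij Ijk Iki r h $ 1 = DR Iij Ijk Iki r k $ 1"
    "DR Iij Ijk Iki r h $ 2 = DR Iij Ijk Iki r k $ 2"
    "DR Iij Ijk Iki r h $ 3 = DR Iij Ijk Iki r k $ 3" by auto
  then have e1: "(r$1 + Iij*r$2) * h$1 + (r$2 + Iij*r$1) * h$2 = (r$1 + Iij*r$2) * k$1 + (r$2 + Iij*r$1) * k$2"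
    and e2: "(r$2 + Ijk*r$3) * h$2 + (r$3 + Ijk*r$2) * h$3 = (r$2 + Ijk*r$3) * k$2 + (r$3 + Ijk*r$2) * k$3"
    and e3: "(r$3 + Iki*r$1) * h$3 + (r$1 + Iki*r$3) * h$1 = (r$3 + Iki*r$1) * k$3 + (r$1 + Iki*r$3) * k$1"
    using l1 l2 l3 by (auto simp: DR_def)
  have "h$1 - k$1 = 0 \<and> h$2 - k$2 = 0 \<and> h$3 - k$3 = 0"
  proof (rule alg3[of "r$1 + Iij*r$2" "r$2 + Iij*r$1" "r$2 + Ijk*r$3" "r$3 + Ijk*r$2" "r$3 + Iki*r$1" "r$1 + Iki*r$3"])
    show "0 < r$1 + Iij*r$2" "0 < r$2 + Iij*r$1" "0 < r$2 + Ijk*r$3" "0 < r$3 + Ijk*r$2"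
      "0 < r$3 + Iki*r$1" "0 < r$1 + Iki*r$3" using I p1 p2 p3 by (auto intro!: add_pos_nonneg)
    show "(r$1 + Iij*r$2) * (h$1 - k$1) + (r$2 + Iij*r$1) * (h$2 - k$2) = 0"
      using e1 by (simp add: algebra_simps)
    show "(r$2 + Ijk*r$3) * (h$2 - k$2) + (r$3 + Ijk*r$2) * (h$3 - k$3) = 0"
      using e2 by (simp add: algebra_simps)
    show "(r$1 + Iki*r$3) * (h$1 - k$1) + (r$3 + Iki*r$1) * (h$3 - k$3) = 0"
      using e3 by (simp add: algebra_simps)
  qed
  then show "h = k" by (simp add: vec_eq_iff forall_3)
qed

lemma edge_lt:
  assumes "0 \<le> I" "0 < a" "0 < b" "a \<le> a'" "b \<le> b'" "a < a' \<or> b < b'"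
  shows "edge_len I a b < edge_len I a' b'"
proof -
  have "a^2 \<le> a'^2" "b^2 \<le> b'^2" using assms by (auto intro!: power_mono)
  moreover have "a^2 < a'^2 \<or> b^2 < b'^2" using assms by (auto intro!: power_strict_mono)
  moreover have "2*I*a*b \<le> 2*I*a'*b'" using assms
    by (intro mult_mono) (auto intro!: mult_mono)
  ultimately show ?thesis unfolding edge_len_def by (intro real_sqrt_less_mono) linarith
qed

lemma edge_cmp:
  assumes "0 \<le> I" "0 < a" "0 < b" "0 < a'" "0 < b'" "edge_len I a b = edge_len I a' b'"
  shows "(a < a' \<longrightarrow> b' < b) \<and> (a' < a \<longrightarrow> b < b') \<and> (a = a' \<longrightarrow> b = b')"
  using edge_lt[of I a b a' b'] edge_lt[of I a' b' a b] assms by force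

lemma rhoE_inj:
  assumes I: "0 \<le> Iij" "0 \<le> Ijk" "0 \<le> Iki"
  shows "inj_on (rhoE Iij Ijk Iki) pos_octant"
proof (rule inj_onI)
  fix r s assume r: "r \<in> pos_octant" and s: "s \<in> pos_octant" and eq: "rhoE Iij Ijk Iki r = rhoE Iij Ijk Iki s"
  have p: "0 < r$1" "0 < r$2" "0 < r$3" "0 < s$1" "0 < s$2" "0 < s$3"
    using r s by (auto simp: pos_octant_def)
  from eq have "rhoE Iij Ijk Iki r $ 1 = rhoE Iij Ijk Iki s $ 1"
    "rhoE Iij Ijk Iki r $ 2 = rhoE Iij Ijk Iki s $ 2"
    "rhoE Iij Ijk Iki r $ 3 = rhoE Iij Ijk Iki s $ 3" by auto
  then have c1: "(r$1 < s$1 \<longrightarrow> s$2 < r$2) \<and> (s$1 < r$1 \<longrightarrow> r$2 < s$2) \<and> (r$1 = s$1 \<longrightarrow> r$2 = s$2)"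
    and c2: "(r$2 < s$2 \<longrightarrow> s$3 < r$3) \<and> (s$2 < r$2 \<longrightarrow> r$3 < s$3) \<and> (r$2 = s$2 \<longrightarrow> r$3 = s$3)"
    and c3: "(r$3 < s$3 \<longrightarrow> s$1 < r$1) \<and> (s$3 < r$3 \<longrightarrow> r$1 < s$1) \<and> (r$3 = s$3 \<longrightarrow> r$1 = s$1)"
    using edge_cmp[OF I(1) p(1) p(2) p(4) p(5)] edge_cmp[OF I(2) p(2) p(3) p(5) p(6)]
      edge_cmp[OF I(3) p(3) p(1) p(6) p(4)] by (auto simp: rhoE_def)
  have "r$1 = s$1 \<and> r$2 = s$2 \<and> r$3 = s$3"
  proof -
    consider "r$1 < s$1" | "s$1 < r$1" | "r$1 = s$1" by linarith
    then show ?thesis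
    proof cases
      case 1
      then have "s$2 < r$2" using c1 by blast
      then have "r$3 < s$3" using c2 by blast
      then have "s$1 < r$1" using c3 by blast
      then show ?thesis using 1 by linarith
    next
      case 2
      then have "r$2 < s$2" using c1 by blast
      then have "s$3 < r$3" using c2 by blast
      then have "r$1 < s$1" using c3 by blast
      then show ?thesis using 2 by linarith
    next
      case 3
      then have "r$2 = s$2" using c1 by blast
      then have "r$3 = s$3" using c2 by blast
      then show ?thesis using 3 \<open>r$2 = s$2\<close> by blast
    qed
  qed
  then show "r = s" by (simp add: vec_eq_iff forall_3)
qed

lemma open_pos_octant: "open pos_octant"
proof -
  have eq: "pos_octant = {r. r$1 > 0} \<inter> {r. r$2 > 0} \<inter> {r::real^3. r$3 > 0}"
    by (auto simp: pos_octant_def forall_3)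
  show ?thesis unfolding eq by (intro open_Int open_halfspace_component_gt_cart)
qed

theorem mainTheorem2:
  fixes Iij Ijk Iki :: real
  assumes "0 \<le> Iij" and "0 \<le> Ijk" and "0 \<le> Iki"
  shows "rhoE Iij Ijk Iki ` pos_octant \<subseteq> pos_octant
    \<and> smooth_embedding pos_octant (rhoE Iij Ijk Iki)
    \<and> (\<forall>l\<in>pos_octant. \<forall>r\<in>pos_octant. \<forall>s\<in>pos_octant.
          rhoE Iij Ijk Iki r = l \<longrightarrow> rhoE Iij Ijk Iki s = l \<longrightarrow> r = s)"
proof (intro conjI)
  show "rhoE Iij Ijk Iki ` pos_octant \<subseteq> pos_octant"
    using assms by (auto simp: pos_octant_def rhoE_def forall_3 intro!: edge_pos)
  have inj: "inj_on (rhoE Iij Ijk Iki) pos_octant" using rhoE_inj assms .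
  have cont: "continuous_on pos_octant (rhoE Iij Ijk Iki)"
    using rhoE_smooth[OF assms] unfolding smooth_on_def by (metis Ck_on.simps(1))
  obtain g where "homeomorphism pos_octant (rhoE Iij Ijk Iki ` pos_octant) (rhoE Iij Ijk Iki) g"
    using invariance_of_domain_homeomorphism[OF open_pos_octant cont _ inj] by auto
  then show "smooth_embedding pos_octant (rhoE Iij Ijk Iki)"
    unfolding smooth_embedding_def using rhoE_smooth[OF assms] rhoE_deriv[OF assms] DR_inj[OF assms]
    by blast
  show "\<forall>l\<in>pos_octant. \<forall>r\<in>pos_octant. \<forall>s\<in>pos_octant.
          rhoE Iij Ijk Iki r = l \<longrightarrow> rhoE Iij Ijk Iki s = l \<longrightarrow> r = s"
    using inj unfolding inj_on_def by metis
qed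

end
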